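(* Every nice bipartite graph $G$ satisfies $\chi'_{qm\Sigma}(G)\le 6$.
   Context: All graphs are simple and finite. A $k$-edge-coloring of $G$ is any map $c:E(G)\to\{1,\dots,k\}$ (adjacent edges may share colors). It induces $\sigma_c(v)=\sum_{u\in N(v)}c(vu)$. The coloring is neighbor sum distinguishing (NSD) if $\sigma_c(u)\ne\sigma_c(v)$ for every edge $uv$. It is quasi-majority if every vertex $v$ is incident to at most $\lceil d(v)/2\rceil$ edges of each single color. $\chi'_{qm\Sigma}(G)$ denotes the least $k$ such that $G$ has a $k$-edge-coloring that is both quasi-majority and NSD. A graph is nice if it has no connected component isomorphic to $K_2$. *)

theory Defs
  imports Main
begin

definition simple_graph :: "'a set \<Rightarrow> 'a set set \<Rightarrow> bool" where
  "simple_graph V E \<longleftrightarrow> finite V \<and> (\<forall>e\<in>E. e \<subseteq> V \<and> card e = 2)"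

definition nbrs :: "'a set set \<Rightarrow> 'a \<Rightarrow> 'a set" where
  "nbrs E v = {u. {u, v} \<in> E}"

definition degree :: "'a set set \<Rightarrow> 'a \<Rightarrow> nat" where
  "degree E v = card (nbrs E v)"

definition bipartite :: "'a set \<Rightarrow> 'a set set \<Rightarrow> bool" where
  "bipartite V E \<longleftrightarrow> (\<exists>A \<subseteq> V. \<forall>e\<in>E. card (e \<inter> A) = 1)"

(* nice: no connected component isomorphic to K2, i.e. no edge both of whose ends have degree 1 *)
definition nice :: "'a set set \<Rightarrow> bool" where
  "nice E \<longleftrightarrow> (\<forall>u v. {u, v} \<in> E \<longrightarrow> \<not> (degree E u = 1 \<and> degree E v = 1))"

definition edge_coloring :: "nat \<Rightarrow> 'a set set \<Rightarrow> ('a set \<Rightarrow> nat) \<Rightarrow> bool" where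
  "edge_coloring k E c \<longleftrightarrow> (\<forall>e\<in>E. c e \<in> {1..k})"

definition sigma :: "'a set set \<Rightarrow> ('a set \<Rightarrow> nat) \<Rightarrow> 'a \<Rightarrow> nat" where
  "sigma E c v = (\<Sum>u\<in>nbrs E v. c {v, u})"

definition nsd :: "'a set set \<Rightarrow> ('a set \<Rightarrow> nat) \<Rightarrow> bool" where
  "nsd E c \<longleftrightarrow> (\<forall>u v. {u, v} \<in> E \<longrightarrow> sigma E c u \<noteq> sigma E c v)"

definition quasi_majority :: "'a set \<Rightarrow> 'a set set \<Rightarrow> ('a set \<Rightarrow> nat) \<Rightarrow> bool" where
  "quasi_majority V E c \<longleftrightarrow>
     (\<forall>v\<in>V. \<forall>i. 2 * card {u \<in> nbrs E v. c {v, u} = i} \<le> degree E v + 1)"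

(* chi'_{qm Sigma}(G) \<le> k : some k-edge-coloring is both quasi-majority and NSD *)
definition qm_nsd_colorable :: "nat \<Rightarrow> 'a set \<Rightarrow> 'a set set \<Rightarrow> bool" where
  "qm_nsd_colorable k V E \<longleftrightarrow>
     (\<exists>c. edge_coloring k E c \<and> quasi_majority V E c \<and> nsd E c)"

end

theory Submission
  imports Defs
begin

lemma nbrs_sym: "u \<in> nbrs E v \<longleftrightarrow> v \<in> nbrs E u"
  by (simp add: nbrs_def insert_commute)

lemma Suc_mod_lt: "i < m \<Longrightarrow> Suc i mod m = (if Suc i = m then 0 else Suc i)"
  by auto

lemma cyc_edge_uniq:
  fixes c :: "nat \<Rightarrow> 'a"
  assumes inj: "inj_on c {..<m}" and m4: "m \<ge> 4" and ik: "i < m" "k < m"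
    and eq: "{c k, c (Suc k mod m)} = {c i, c (Suc i mod m)}"
  shows "i = k"
proof -
  have si: "Suc i mod m < m" and sk: "Suc k mod m < m" using ik by auto
  from eq consider "c k = c i" | "c k = c (Suc i mod m) \<and> c (Suc k mod m) = c i"
    by (auto simp: doubleton_eq_iff)
  then show ?thesis
  proof cases
    case 1 then show ?thesis using inj ik by (auto dest: inj_onD)
  next
    case 2
    then have "k = Suc i mod m" "Suc k mod m = i" using inj ik si sk
      by (auto dest: inj_onD)
    then show ?thesis using ik m4 by (auto simp: Suc_mod_lt split: if_splits)
  qed
qed

lemma cycle_color:
  fixes c :: "nat \<Rightarrow> 'a" and m :: nat
  assumes inj: "inj_on c {..<m}" and ev: "even m" and m4: "m \<ge> 4"
  defines "F \<equiv> (\<lambda>i. {c i, c (Suc i mod m)}) ` {..<m}"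
    and "hc \<equiv> \<lambda>e. \<exists>i<m. e = {c i, c (Suc i mod m)} \<and> even i"
  shows "w \<notin> c ` {..<m} \<Longrightarrow> nbrs F w = {}"
    and "w \<in> c ` {..<m} \<Longrightarrow> \<exists>x y. x \<noteq> y \<and> nbrs F w = {x,y} \<and> hc {w,x} \<noteq> hc {w,y}"
proof -
  assume "w \<notin> c ` {..<m}"
  then show "nbrs F w = {}"
    by (auto simp: nbrs_def F_def doubleton_eq_iff)
next
  assume "w \<in> c ` {..<m}"
  then obtain k where k: "k < m" "w = c k" by auto
  define p where "p = (k + m - 1) mod m"
  have pm: "p < m" using k by (simp add: p_def)
  have sp: "Suc p mod m = k"
    using k m4 by (cases k) (auto simp: p_def Suc_mod_lt)
  have pk: "p \<noteq> Suc k mod m"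
    using k m4 by (cases k) (auto simp: p_def Suc_mod_lt split: if_splits)
  have evp: "even p \<longleftrightarrow> odd k"
    using k m4 ev by (cases k) (auto simp: p_def)
  have skm: "Suc k mod m < m" using k by auto
  define x where "x = c (Suc k mod m)"
  define y where "y = c p"
  have xy: "x \<noteq> y" using inj pk pm skm by (auto simp: x_def y_def dest: inj_onD)
  have hcx: "hc {w,x} \<longleftrightarrow> even k"
  proof
    assume "hc {w,x}"
    then obtain i where i: "i < m" "{c k, c (Suc k mod m)} = {c i, c (Suc i mod m)}" "even i"
      by (auto simp: hc_def k x_def)
    then have "i = k" using cyc_edge_uniq[OF inj m4 i(1) k(1)] by simp
    then show "even k" using i by simp
  next
    assume "even k" then show "hc {w,x}" using k by (auto simp: hc_def x_def)
  qed
  have hcy: "hc {w,y} \<longleftrightarrow> even p"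
  proof
    assume "hc {w,y}"
    then obtain i where i: "i < m" "{c p, c (Suc p mod m)} = {c i, c (Suc i mod m)}" "even i"
      by (auto simp: hc_def k y_def sp insert_commute)
    then have "i = p" using cyc_edge_uniq[OF inj m4 i(1) pm] by simp
    then show "even p" using i by simp
  next
    assume "even p" then show "hc {w,y}" using pm sp
      by (auto simp: hc_def y_def k insert_commute intro!: exI[of _ p])
  qed
  have nb: "nbrs F w = {x,y}"
  proof (intro equalityI subsetI)
    fix u assume "u \<in> nbrs F w"
    then obtain i where i: "i < m" "{u, c k} = {c i, c (Suc i mod m)}"
      by (auto simp: nbrs_def F_def k)
    have sim: "Suc i mod m < m" using i by auto
    from i(2) consider "u = c i \<and> c k = c (Suc i mod m)" | "u = c (Suc i mod m) \<and> c k = c i"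
      by (auto simp: doubleton_eq_iff)
    then show "u \<in> {x,y}"
    proof cases
      case 1
      then have "k = Suc i mod m" using inj k sim by (auto dest: inj_onD)
      then have "i = p" using i(1) m4 by (auto simp: p_def Suc_mod_lt split: if_splits)
      then show ?thesis using 1 by (simp add: y_def)
    next
      case 2
      then have "k = i" using inj k i by (auto dest: inj_onD)
      then show ?thesis using 2 by (simp add: x_def)
    qed
  next
    fix u assume "u \<in> {x,y}"
    then show "u \<in> nbrs F w"
    proof
      assume "u = x" then show ?thesis using k
        by (auto simp: nbrs_def F_def x_def insert_commute)
    next
      assume "u \<in> {y}" then have "u = y" by simp
      then show ?thesis using pm sp k
        by (auto simp: nbrs_def F_def y_def intro!: image_eqI[of _ _ p])
    qed
  qed
  show "\<exists>x y. x \<noteq> y \<and> nbrs F w = {x,y} \<and> hc {w,x} \<noteq> hc {w,y}"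
    using xy nb hcx hcy evp by blast
qed

lemma side_diff:
  assumes "card e = 2" "card (e \<inter> A) = 1" "e = {a,b}"
  shows "(a \<in> A) \<noteq> (b \<in> A)" "a \<noteq> b"
proof -
  show ab: "a \<noteq> b" using assms(1,3) by auto
  show "(a \<in> A) \<noteq> (b \<in> A)"
  proof
    assume h: "(a \<in> A) = (b \<in> A)"
    show False
    proof (cases "a \<in> A")
      case True
      then have "e \<inter> A = {a,b}" using h assms(3) by auto
      then show False using ab assms(2) by simp
    next
      case False
      then have "e \<inter> A = {}" using h assms(3) by auto
      then show False using assms(2) by simp
    qed
  qed
qed

lemma edge_sides:
  assumes "{a,b} \<in> E" "\<forall>e\<in>E. card e = 2" "\<forall>e\<in>E. card (e \<inter> A) = 1"
  shows "(a \<in> A) \<noteq> (b \<in> A)"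
  using side_diff(1)[of "{a,b}" A a b] assms by blast

lemma leaf_or_cycle:
  assumes fin: "finite E" and c2: "\<forall>e\<in>E. card e = 2" and bip: "\<forall>e\<in>E. card (e \<inter> A) = 1"
    and ne: "E \<noteq> {}"
  shows "(\<exists>a b. {a,b} \<in> E \<and> nbrs E a = {b}) \<or>
         (\<exists>c m. inj_on c {..<m} \<and> even m \<and> m \<ge> 4 \<and> (\<forall>i<m. {c i, c (Suc i mod m)} \<in> E))"
proof -
  define V' where "V' = \<Union>E"
  have finV: "finite V'" unfolding V'_def
  proof (rule finite_Union[OF fin])
    fix e assume "e \<in> E" then have "card e = 2" using c2 by blast
    then show "finite e" by (cases "finite e") auto
  qed
  define P where "P xs \<longleftrightarrow> distinct xs \<and> set xs \<subseteq> V' \<and> length xs \<ge> 2 \<and>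
      (\<forall>i. Suc i < length xs \<longrightarrow> {xs!i, xs!Suc i} \<in> E)" for xs
  obtain e where e: "e \<in> E" using ne by auto
  then obtain a b where ab: "e = {a,b}" "a \<noteq> b" using c2 by (meson card_2_iff)
  have "P [a,b]" using ab e by (auto simp: P_def V'_def less_Suc_eq)
  moreover have "\<forall>y. P y \<longrightarrow> length y \<le> card V'"
  proof (intro allI impI)
    fix y assume "P y"
    then have "distinct y" "set y \<subseteq> V'" by (auto simp: P_def)
    then have "card (set y) \<le> card V'" using finV by (simp add: card_mono)
    then show "length y \<le> card V'" using distinct_card[OF \<open>distinct y\<close>] by simp
  qed
  ultimately have Pab: "P [a,b]" and bd: "\<forall>y. P y \<longrightarrow> length y \<le> card V'" by auto
  have bd': "\<forall>y. P y \<longrightarrow> length y < Suc (card V')" using bd by auto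
  from ex_has_greatest_nat[OF Pab bd'] obtain xs where xs: "P xs"
    and mx': "\<forall>y. P y \<longrightarrow> length y \<le> length xs" by blast
  have mx: "\<And>ys. P ys \<Longrightarrow> length ys \<le> length xs" using mx' by blast
  have dxs: "distinct xs" and sxs: "set xs \<subseteq> V'" and lxs: "length xs \<ge> 2"
    and exs: "\<And>i. Suc i < length xs \<Longrightarrow> {xs!i, xs!Suc i} \<in> E"
    using xs unfolding P_def by blast+
  have e01: "{xs!0, xs!1} \<in> E" using exs[of 0] lxs by simp
  show ?thesis
  proof (cases "nbrs E (xs!0) = {xs!1}")
    case True
    then show ?thesis using e01 by blast
  next
    case False
    have "xs!1 \<in> nbrs E (xs!0)" using e01 by (simp add: nbrs_def insert_commute)
    with False obtain w where w: "w \<in> nbrs E (xs!0)" "w \<noteq> xs!1" by blast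
    have ew: "{w, xs!0} \<in> E" using w by (simp add: nbrs_def)
    have wV: "w \<in> V'" using ew by (auto simp: V'_def)
    have w0: "w \<noteq> xs!0" using side_diff(2)[OF _ _ refl, of w "xs!0" A] c2 bip ew by blast
    have "w \<in> set xs"
    proof (rule ccontr)
      assume nw: "w \<notin> set xs"
      have "P (w # xs)" unfolding P_def
      proof (intro conjI allI impI)
        show "distinct (w # xs)" using nw dxs by simp
        show "set (w # xs) \<subseteq> V'" using wV sxs by simp
        show "2 \<le> length (w # xs)" using lxs by simp
        fix i assume i: "Suc i < length (w # xs)"
        show "{(w # xs) ! i, (w # xs) ! Suc i} \<in> E"
        proof (cases i)
          case 0 then show ?thesis using ew by simp
        next
          case (Suc j) then show ?thesis using exs[of j] i by simp
        qed
      qed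
      then have "length (w # xs) \<le> length xs" by (rule mx)
      then show False by simp
    qed
    then obtain j where j: "j < length xs" "xs ! j = w" by (meson in_set_conv_nth)
    have j0: "j \<noteq> 0" using j w0 by (metis)
    have j1: "j \<noteq> 1" using j w by auto
    have sides: "\<And>i. i < length xs \<Longrightarrow> (xs!i \<in> A) = ((xs!0 \<in> A) = even i)"
    proof -
      fix i show "i < length xs \<Longrightarrow> (xs!i \<in> A) = ((xs!0 \<in> A) = even i)"
      proof (induction i)
        case 0 then show ?case by simp
      next
        case (Suc i)
        have ee: "{xs!i, xs!Suc i} \<in> E" using exs Suc.prems by simp
        have "(xs!i \<in> A) \<noteq> (xs!Suc i \<in> A)"
          using edge_sides[OF ee c2 bip] .
        then show ?case using Suc by auto
      qed
    qed
    have "(w \<in> A) \<noteq> (xs!0 \<in> A)"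
      using edge_sides[OF ew c2 bip] .
    then have oj: "odd j" using sides[OF j(1)] j(2) by auto
    define m where "m = Suc j"
    have inj: "inj_on (\<lambda>i. xs!i) {..<m}"
      using dxs j(1) by (auto simp: m_def inj_on_def nth_eq_iff_index_eq)
    have cyc: "\<forall>i<m. {xs!i, xs!(Suc i mod m)} \<in> E"
    proof (intro allI impI)
      fix i assume i: "i < m"
      show "{xs!i, xs!(Suc i mod m)} \<in> E"
      proof (cases "i = j")
        case True then show ?thesis using ew j by (simp add: m_def insert_commute)
      next
        case False
        then have "Suc i < m" using i by (simp add: m_def)
        then show ?thesis using exs[of i] j(1) by (simp add: m_def)
      qed
    qed
    have "even m" "m \<ge> 4" using oj j0 j1 unfolding m_def by presburger+
    then show ?thesis using inj cyc by blast
  qed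
qed

lemma finite_UE: "finite E \<Longrightarrow> \<forall>e\<in>E. card e = 2 \<Longrightarrow> finite (\<Union>E)"
proof (rule finite_Union)
  fix e assume "\<forall>e\<in>E. card e = 2" "e \<in> E" then have "card e = 2" by blast
  then show "finite e" by (cases "finite e") auto
qed

lemma finite_nbrs: "finite E \<Longrightarrow> \<forall>e\<in>E. card e = 2 \<Longrightarrow> finite (nbrs E v)"
  by (rule finite_subset[OF _ finite_UE]) (auto simp: nbrs_def)

lemma equitable:
  assumes "finite E" "\<forall>e\<in>E. card e = 2" "\<forall>e\<in>E. card (e \<inter> A) = 1"
  shows "\<exists>h. \<forall>v (b::bool). 2 * card {u\<in>nbrs E v. h {v,u} = b} \<le> card (nbrs E v) + 1"
  using assms
proof (induction "card E" arbitrary: E rule: less_induct)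
  case less
  note fin = less.prems(1) and c2 = less.prems(2) and bip = less.prems(3)
  show ?case
  proof (cases "E = {}")
    case True
    then show ?thesis by (auto simp: nbrs_def)
  next
    case False
    from leaf_or_cycle[OF fin c2 bip False] show ?thesis
    proof
      assume "\<exists>a b. {a,b} \<in> E \<and> nbrs E a = {b}"
      then obtain a b where ab: "{a,b} \<in> E" "nbrs E a = {b}" by blast
      have anb: "a \<noteq> b" using side_diff(2)[of "{a,b}" A a b] c2 bip ab(1) by blast
      define E' where "E' = E - {{a,b}}"
      have fin': "finite E'" using fin by (simp add: E'_def)
      have "card E > 0" using ab(1) fin card_gt_0_iff by blast
      then have lt: "card E' < card E" using ab(1) fin by (simp add: E'_def)
      have c2': "\<forall>e\<in>E'. card e = 2" and bip': "\<forall>e\<in>E'. card (e \<inter> A) = 1"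
        using c2 bip by (auto simp: E'_def)
      from less.hyps[OF lt fin' c2' bip'] obtain h' where
        h': "\<And>v (bb::bool). 2 * card {u\<in>nbrs E' v. h' {v,u} = bb} \<le> card (nbrs E' v) + 1"
        by blast
      have key: "\<And>u. ({u,b} = {a,b}) = (u = a)" using anb by (auto simp: doubleton_eq_iff)
      have nbE': "nbrs E' b = nbrs E b - {a}" unfolding nbrs_def E'_def using key by blast
      have anE: "a \<in> nbrs E b" using ab(1) by (simp add: nbrs_def)
      have nbb: "nbrs E b = insert a (nbrs E' b)" "a \<notin> nbrs E' b"
        using nbE' anE by auto
      have nbo: "\<And>v. v \<noteq> a \<Longrightarrow> v \<noteq> b \<Longrightarrow> nbrs E' v = nbrs E v"
      proof -
        fix v assume "v \<noteq> a" "v \<noteq> b"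
        then have "\<And>u. {u,v} \<noteq> {a,b}" by blast
        then show "nbrs E' v = nbrs E v" unfolding nbrs_def E'_def by blast
      qed
      have finb: "finite (nbrs E' b)" using finite_nbrs[OF fin' ] c2 by (auto simp: E'_def)
      define cnt where "cnt \<beta> = card {u\<in>nbrs E' b. h' {b,u} = \<beta>}" for \<beta>
      have csum: "cnt True + cnt False = card (nbrs E' b)"
      proof -
        have "card (nbrs E' b) = card ({u\<in>nbrs E' b. h' {b,u}} \<union> {u\<in>nbrs E' b. \<not> h' {b,u}})"
          by (rule arg_cong[where f=card]) auto
        also have "\<dots> = cnt True + cnt False"
          by (subst card_Un_disjoint) (use finb in \<open>auto simp: cnt_def\<close>)
        finally show ?thesis by simp
      qed
      define b0 where "b0 = (cnt True \<le> cnt False)"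
      have b0: "2 * cnt b0 \<le> card (nbrs E' b)" using csum by (cases "cnt True \<le> cnt False") (simp_all add: b0_def)
      define h where "h = h'({a,b} := b0)"
      show ?thesis
      proof (intro exI allI)
        fix v \<beta>
        show "2 * card {u\<in>nbrs E v. h {v,u} = \<beta>} \<le> card (nbrs E v) + 1"
        proof (cases "v = a")
          case True
          have "card {u\<in>nbrs E v. h {v,u} = \<beta>} \<le> card (nbrs E v)"
            using True ab(2) by (intro card_mono) auto
          then show ?thesis using True ab(2) by simp
        next
          case va: False
          show ?thesis
          proof (cases "v = b")
            case True
            have hh: "\<And>u. u \<in> nbrs E' b \<Longrightarrow> h {b,u} = h' {b,u}"
              using nbb(2) by (auto simp: h_def doubleton_eq_iff)
            have hba: "h {b,a} = b0" by (simp add: h_def insert_commute)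
            have S: "{u\<in>nbrs E b. h {b,u} = \<beta>} =
                (if b0 = \<beta> then insert a {u\<in>nbrs E' b. h' {b,u} = \<beta>} else {u\<in>nbrs E' b. h' {b,u} = \<beta>})"
              using hh hba nbb(1) by auto
            have cd: "card (nbrs E b) = card (nbrs E' b) + 1"
              using nbb finb by simp
            have hb: "2 * cnt \<beta> \<le> card (nbrs E' b) + 1" using h' unfolding cnt_def by blast
            have finS: "finite {u\<in>nbrs E' b. h' {b,u} = \<beta>}" using finb by simp
            have anS: "a \<notin> {u\<in>nbrs E' b. h' {b,u} = \<beta>}" using nbb(2) by simp
            show ?thesis
            proof (cases "b0 = \<beta>")
              case True
              then have "card {u\<in>nbrs E b. h {b,u} = \<beta>} = cnt \<beta> + 1"
                using S finS anS by (simp add: cnt_def)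
              then show ?thesis using \<open>v = b\<close> cd b0 True by simp
            next
              case False
              then have "card {u\<in>nbrs E b. h {b,u} = \<beta>} = cnt \<beta>"
                using S by (simp add: cnt_def)
              then show ?thesis using \<open>v = b\<close> cd hb by simp
            qed
          next
            case vb: False
            have "{u\<in>nbrs E v. h {v,u} = \<beta>} = {u\<in>nbrs E' v. h' {v,u} = \<beta>}"
              using nbo[OF va vb] va vb by (auto simp: h_def doubleton_eq_iff)
            then show ?thesis using h'[of v \<beta>] nbo[OF va vb] by simp
          qed
        qed
      qed
    next
      assume "\<exists>c m. inj_on c {..<m} \<and> even m \<and> m \<ge> 4 \<and> (\<forall>i<m. {c i, c (Suc i mod m)} \<in> E)"
      then obtain c and m :: nat where cm: "inj_on c {..<m}" "even m" "m \<ge> 4"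
        "\<forall>i<m. {c i, c (Suc i mod m)} \<in> E" by blast
      define F where "F \<equiv> (\<lambda>i. {c i, c (Suc i mod m)}) ` {..<m}"
      define hc where "hc \<equiv> \<lambda>e. \<exists>i<m. e = {c i, c (Suc i mod m)} \<and> even i"
      have cc1: "\<And>w. w \<notin> c ` {..<m} \<Longrightarrow> nbrs F w = {}"
        unfolding F_def by (rule cycle_color(1)[OF cm(1-3)])
      have cc2: "\<And>w. w \<in> c ` {..<m} \<Longrightarrow> \<exists>x y. x \<noteq> y \<and> nbrs F w = {x,y} \<and> hc {w,x} \<noteq> hc {w,y}"
        unfolding F_def hc_def by (rule cycle_color(2)[OF cm(1-3)])
      have FE: "F \<subseteq> E" using cm(4) by (auto simp: F_def)
      have "0 \<in> {..<m}" using cm(3) by simp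
      then have Fne: "F \<noteq> {}" unfolding F_def by blast
      define E' where "E' = E - F"
      have fin': "finite E'" using fin by (simp add: E'_def)
      have lt: "card E' < card E" unfolding E'_def
      proof (rule psubset_card_mono[OF fin])
        show "E - F \<subset> E" using FE Fne by blast
      qed
      have c2': "\<forall>e\<in>E'. card e = 2" and bip': "\<forall>e\<in>E'. card (e \<inter> A) = 1"
        using c2 bip by (auto simp: E'_def)
      from less.hyps[OF lt fin' c2' bip'] obtain h' where
        h': "\<And>v (bb::bool). 2 * card {u\<in>nbrs E' v. h' {v,u} = bb} \<le> card (nbrs E' v) + 1"
        by blast
      define h where "h e = (if e \<in> F then hc e else h' e)" for e
      have finE': "finite (nbrs E' v)" for v using finite_nbrs[OF fin' ] c2 by (auto simp: E'_def)
      have finF: "finite F" by (simp add: F_def)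
      have nbsplit: "nbrs E v = nbrs E' v \<union> nbrs F v" "nbrs E' v \<inter> nbrs F v = {}" for v
        using FE by (auto simp: nbrs_def E'_def)
      show ?thesis
      proof (intro exI allI)
        fix v \<beta>
        have hE': "\<And>u. u \<in> nbrs E' v \<Longrightarrow> h {v,u} = h' {v,u}"
          unfolding nbrs_def E'_def h_def by (simp add: insert_commute)
        have hF: "\<And>u. u \<in> nbrs F v \<Longrightarrow> h {v,u} = hc {v,u}"
          unfolding nbrs_def h_def by (simp add: insert_commute)
        have S: "{u\<in>nbrs E v. h {v,u} = \<beta>} = {u\<in>nbrs E' v. h' {v,u} = \<beta>} \<union> {u\<in>nbrs F v. hc {v,u} = \<beta>}"
          unfolding nbsplit(1)[of v] using hE' hF by blast
        have D: "{u\<in>nbrs E' v. h' {v,u} = \<beta>} \<inter> {u\<in>nbrs F v. hc {v,u} = \<beta>} = {}"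
          using nbsplit(2)[of v] by blast
        have finF': "finite (nbrs F v)" using finite_nbrs[OF finF] c2 FE by blast
        have cS: "card {u\<in>nbrs E v. h {v,u} = \<beta>} = card {u\<in>nbrs E' v. h' {v,u} = \<beta>} + card {u\<in>nbrs F v. hc {v,u} = \<beta>}"
          unfolding S by (rule card_Un_disjoint) (use finE' finF' D in auto)
        have cN: "card (nbrs E v) = card (nbrs E' v) + card (nbrs F v)"
          unfolding nbsplit(1) by (rule card_Un_disjoint) (use finE' finF' nbsplit(2) in auto)
        show "2 * card {u\<in>nbrs E v. h {v,u} = \<beta>} \<le> card (nbrs E v) + 1"
        proof (cases "v \<in> c ` {..<m}")
          case False
          then have "nbrs F v = {}" using cc1 by blast
          then show ?thesis using cS cN h'[of v \<beta>] by simp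
        next
          case True
          then obtain x y where xy: "x \<noteq> y" "nbrs F v = {x,y}" "hc {v,x} \<noteq> hc {v,y}"
            using cc2 by blast
          have "card {u\<in>nbrs F v. hc {v,u} = \<beta>} = 1"
          proof (cases "hc {v,x} = \<beta>")
            case True
            then have "{u\<in>nbrs F v. hc {v,u} = \<beta>} = {x}" using xy by auto
            then show ?thesis by simp
          next
            case False
            then have "{u\<in>nbrs F v. hc {v,u} = \<beta>} = {y}" using xy by auto
            then show ?thesis by simp
          qed
          moreover have "card (nbrs F v) = 2" using xy by simp
          ultimately show ?thesis using cS cN h'[of v \<beta>] by simp
        qed
      qed
    qed
  qed
qed

lemma sq_mod3: "\<not> (3::int) dvd s \<Longrightarrow> 3 dvd (s * s - 1)"
proof -
  assume "\<not> (3::int) dvd s"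
  then have "3 dvd (s - 1) \<or> 3 dvd (s + 1)" by presburger
  moreover have "s * s - 1 = (s - 1) * (s + 1)" by (simp add: algebra_simps)
  ultimately show ?thesis by (metis dvd_mult dvd_mult2)
qed

definition valid3 :: "'a set set \<Rightarrow> ('a \<Rightarrow> int) \<Rightarrow> bool" where
  "valid3 E f \<longleftrightarrow> (\<forall>u v. {u,v} \<in> E \<longrightarrow> 3 dvd (f u + f v))"

lemma sum_ind_shift:
  fixes f t :: "'a \<Rightarrow> int"
  assumes "finite U" "u \<in> U" "v \<in> U" "u \<noteq> v"
  shows "(\<Sum>w\<in>U. f w * (t w - (if w = u then x else 0) - (if w = v then x else 0)))
       = (\<Sum>w\<in>U. f w * t w) - x * (f u + f v)"
proof -
  have "(\<Sum>w\<in>U. f w * (t w - (if w = u then x else 0) - (if w = v then x else 0)))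
      = (\<Sum>w\<in>U. f w * t w - (if w = u then f w * x else 0) - (if w = v then f w * x else 0))"
    by (rule sum.cong) (auto simp: algebra_simps)
  also have "\<dots> = (\<Sum>w\<in>U. f w * t w) - (\<Sum>w\<in>U. (if w = u then f w * x else 0)) - (\<Sum>w\<in>U. (if w = v then f w * x else 0))"
    by (simp add: sum_subtractf)
  also have "\<dots> = (\<Sum>w\<in>U. f w * t w) - f u * x - f v * x"
    using assms by (simp add: sum.delta)
  finally show ?thesis by (simp add: algebra_simps)
qed

lemma z3_solve:
  fixes E :: "'a set set" and U :: "'a set"
  assumes "finite E" "\<forall>e\<in>E. card e = 2" "finite U" "\<Union>E \<subseteq> U"
  shows "\<forall>t::'a\<Rightarrow>int. (\<forall>f. valid3 E f \<longrightarrow> 3 dvd (\<Sum>w\<in>U. f w * t w)) \<longrightarrow>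
           (\<exists>\<rho>::'a set\<Rightarrow>int. \<forall>w\<in>U. 3 dvd ((\<Sum>u\<in>nbrs E w. \<rho> {w,u}) - t w))"
  using assms(1,2,4)
proof (induction E rule: finite_induct)
  case empty
  show ?case
  proof (intro allI impI)
    fix t :: "'a \<Rightarrow> int"
    assume H: "\<forall>f. valid3 {} f \<longrightarrow> 3 dvd (\<Sum>w\<in>U. f w * t w)"
    show "\<exists>\<rho>::'a set\<Rightarrow>int. \<forall>w\<in>U. 3 dvd ((\<Sum>u\<in>nbrs {} w. \<rho> {w,u}) - t w)"
    proof (intro exI ballI)
      fix w assume w: "w \<in> U"
      have "3 dvd (\<Sum>x\<in>U. (\<lambda>x. if x = w then 1 else 0) x * t x)"
        using H by (simp add: valid3_def)
      also have "(\<Sum>x\<in>U. (\<lambda>x. if x = w then 1 else 0) x * t x) = (\<Sum>x\<in>U. if x = w then t x else 0)"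
        by (rule sum.cong) auto
      also have "\<dots> = t w" using w assms(3) by (simp add: sum.delta')
      finally show "3 dvd ((\<Sum>u\<in>nbrs {} w. (\<lambda>_. 0::int) {w,u}) - t w)"
        by (simp add: nbrs_def)
    qed
  qed
next
  case (insert e F)
  have c2F: "\<forall>e\<in>F. card e = 2" and UF: "\<Union>F \<subseteq> U" using insert.prems by auto
  note IH = insert.IH[OF c2F UF]
  have "card e = 2" using insert.prems by auto
  then obtain u v where e: "e = {u,v}" "u \<noteq> v" by (meson card_2_iff)
  have uU: "u \<in> U" and vU: "v \<in> U" using insert.prems e by auto
  have finF: "\<And>w. finite (nbrs F w)" using finite_nbrs[OF insert.hyps(1) c2F] .
  show ?case
  proof (intro allI impI)
    fix t :: "'a \<Rightarrow> int"
    assume H: "\<forall>f. valid3 (insert e F) f \<longrightarrow> 3 dvd (\<Sum>w\<in>U. f w * t w)"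
    have validG: "valid3 (insert e F) f \<longleftrightarrow> valid3 F f \<and> 3 dvd (f u + f v)" for f
      unfolding valid3_def e by (auto simp: doubleton_eq_iff add.commute)
    define t' where "t' x w = t w - (if w = u then x else 0) - (if w = v then x else 0)" for x w
    have shift: "(\<Sum>w\<in>U. f w * t' x w) = (\<Sum>w\<in>U. f w * t w) - x * (f u + f v)" for f x
      unfolding t'_def by (rule sum_ind_shift[OF assms(3) uU vU e(2)])
    have "\<exists>x. \<forall>f. valid3 F f \<longrightarrow> 3 dvd (\<Sum>w\<in>U. f w * t' x w)"
    proof (cases "\<forall>f. valid3 F f \<longrightarrow> 3 dvd (f u + f v)")
      case True
      show ?thesis
      proof (intro exI allI impI)
        fix f assume "valid3 F f"
        then have "valid3 (insert e F) f" using True validG by blast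
        then show "3 dvd (\<Sum>w\<in>U. f w * t' 0 w)" using H shift[of f 0] by simp
      qed
    next
      case False
      then obtain f0 where f0: "valid3 F f0" "\<not> 3 dvd (f0 u + f0 v)" by blast
      define s0 where "s0 = f0 u + f0 v"
      define x where "x = (\<Sum>w\<in>U. f0 w * t w) * s0"
      show ?thesis
      proof (intro exI allI impI)
        fix f assume fv: "valid3 F f"
        define s where "s = f u + f v"
        define lam where "lam = s * s0"
        define g where "g w = f w - lam * f0 w" for w
        have gF: "valid3 F g" using fv f0(1) unfolding valid3_def g_def
        proof (intro allI impI)
          fix a b assume ab: "{a,b} \<in> F"
          have eq: "f a - lam * f0 a + (f b - lam * f0 b) = (f a + f b) - lam * (f0 a + f0 b)"
            by (simp add: algebra_simps)
          have "3 dvd (f a + f b)" "3 dvd (f0 a + f0 b)" using fv f0(1) ab by (auto simp: valid3_def)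
          then have "3 dvd ((f a + f b) - lam * (f0 a + f0 b))" by simp
          then show "3 dvd (f a - lam * f0 a + (f b - lam * f0 b))" by (simp only: eq)
        qed
        have "3 dvd (s0 * s0 - 1)" using sq_mod3 f0(2) s0_def by blast
        then have "3 dvd (s * (s0 * s0 - 1))" by simp
        moreover have "g u + g v = - (s * (s0 * s0 - 1))"
          by (simp add: g_def lam_def s_def s0_def algebra_simps)
        ultimately have "3 dvd (g u + g v)" by simp
        then have "valid3 (insert e F) g" using gF validG by blast
        then have "3 dvd (\<Sum>w\<in>U. g w * t w)" using H by blast
        moreover have "(\<Sum>w\<in>U. g w * t w) = (\<Sum>w\<in>U. f w * t w) - lam * (\<Sum>w\<in>U. f0 w * t w)"
          by (simp add: g_def algebra_simps sum_subtractf sum_distrib_left)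
        moreover have "(\<Sum>w\<in>U. f w * t' x w) = (\<Sum>w\<in>U. f w * t w) - lam * (\<Sum>w\<in>U. f0 w * t w)"
          using shift[of f x] by (simp add: x_def lam_def s_def algebra_simps)
        ultimately show "3 dvd (\<Sum>w\<in>U. f w * t' x w)" by simp
      qed
    qed
    then obtain x where x: "\<forall>f. valid3 F f \<longrightarrow> 3 dvd (\<Sum>w\<in>U. f w * t' x w)" by blast
    from IH[rule_format, of "t' x"] x obtain \<rho>' where
      \<rho>': "\<forall>w\<in>U. 3 dvd ((\<Sum>y\<in>nbrs F w. \<rho>' {w,y}) - t' x w)" by blast
    define \<rho> where "\<rho> = \<rho>'(e := x)"
    have enF: "e \<notin> F" by (rule insert.hyps(2))
    have sumeq: "(\<Sum>y\<in>nbrs (insert e F) w. \<rho> {w,y}) = (\<Sum>y\<in>nbrs F w. \<rho>' {w,y}) + (if w = u then x else 0) + (if w = v then x else 0)" for w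
    proof -
      have same: "(\<Sum>y\<in>nbrs F w. \<rho> {w,y}) = (\<Sum>y\<in>nbrs F w. \<rho>' {w,y})"
      proof (rule sum.cong[OF refl])
        fix y assume "y \<in> nbrs F w"
        then have "{w,y} \<in> F" by (simp add: nbrs_def insert_commute)
        then have "{w,y} \<noteq> e" using enF by blast
        then show "\<rho> {w,y} = \<rho>' {w,y}" by (simp add: \<rho>_def)
      qed
      show ?thesis
      proof (cases "w = u")
        case True
        have nb: "nbrs (insert e F) w = insert v (nbrs F w)"
          using True e by (auto simp: nbrs_def doubleton_eq_iff)
        have vn: "v \<notin> nbrs F w" using True e enF by (simp add: nbrs_def insert_commute)
        have "\<rho> {w,v} = x" using True e by (simp add: \<rho>_def)
        then show ?thesis using nb vn same finF[of w] True e(2) by simp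
      next
        case nu: False
        show ?thesis
        proof (cases "w = v")
          case True
          have nb: "nbrs (insert e F) w = insert u (nbrs F w)"
            using True e by (auto simp: nbrs_def doubleton_eq_iff)
          have un: "u \<notin> nbrs F w" using True e enF by (simp add: nbrs_def)
          have "\<rho> {w,u} = x" using True e by (simp add: \<rho>_def insert_commute)
          then show ?thesis using nb un same finF[of w] True nu by simp
        next
          case False
          have nb: "nbrs (insert e F) w = nbrs F w"
            using False nu e by (auto simp: nbrs_def doubleton_eq_iff)
          then show ?thesis using same False nu by simp
        qed
      qed
    qed
    show "\<exists>\<rho>::'a set\<Rightarrow>int. \<forall>w\<in>U. 3 dvd ((\<Sum>y\<in>nbrs (insert e F) w. \<rho> {w,y}) - t w)"
    proof (intro exI ballI)
      fix w assume "w \<in> U"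
      then have "3 dvd ((\<Sum>y\<in>nbrs F w. \<rho>' {w,y}) - t' x w)" using \<rho>' by blast
      moreover have "(\<Sum>y\<in>nbrs (insert e F) w. \<rho> {w,y}) - t w = (\<Sum>y\<in>nbrs F w. \<rho>' {w,y}) - t' x w"
        using sumeq[of w] by (simp add: t'_def)
      ultimately show "3 dvd ((\<Sum>y\<in>nbrs (insert e F) w. \<rho> {w,y}) - t w)" by simp
    qed
  qed
qed

definition Rg :: "'a set set \<Rightarrow> 'a \<Rightarrow> 'a \<Rightarrow> bool" where
  "Rg E = (\<lambda>x y. {x,y} \<in> E)\<^sup>*\<^sup>*"

lemma Rg_sym: "Rg E x y \<Longrightarrow> Rg E y x"
  unfolding Rg_def
proof (induction rule: rtranclp_induct)
  case base then show ?case by simp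
next
  case (step y z)
  have "{z,y} \<in> E" using step(2) by (simp add: insert_commute)
  then show ?case using step(3) by (rule converse_rtranclp_into_rtranclp)
qed

lemma Rg_trans: "Rg E x y \<Longrightarrow> Rg E y z \<Longrightarrow> Rg E x z"
  unfolding Rg_def by (rule rtranclp_trans)

lemma Rg_refl: "Rg E x x" unfolding Rg_def by simp

lemma Rg_edge: "{x,y} \<in> E \<Longrightarrow> Rg E x y"
proof -
  assume h: "{x,y} \<in> E"
  show ?thesis unfolding Rg_def by (rule r_into_rtranclp[where r="\<lambda>x y. {x,y} \<in> E"]) (simp add: h)
qed

lemma Rg_nb: "Rg E x y \<Longrightarrow> x = y \<or> nbrs E y \<noteq> {}"
  unfolding Rg_def
proof (induction rule: rtranclp_induct)
  case base then show ?case by simp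
next
  case (step y z)
  then have "y \<in> nbrs E z" by (simp add: nbrs_def)
  then show ?case by blast
qed

lemma Rg_V: "\<forall>e\<in>E. e \<subseteq> V \<Longrightarrow> Rg E x y \<Longrightarrow> x \<in> V \<Longrightarrow> y \<in> V"
proof -
  assume s: "\<forall>e\<in>E. e \<subseteq> V" and r: "Rg E x y" and x: "x \<in> V"
  from Rg_nb[OF r] show "y \<in> V"
  proof
    assume "x = y" then show ?thesis using x by simp
  next
    assume "nbrs E y \<noteq> {}"
    then obtain z where "{z,y} \<in> E" by (auto simp: nbrs_def)
    then show ?thesis using s by blast
  qed
qed

lemma Rg_f:
  assumes c2: "\<forall>e\<in>E. card e = 2" and bip: "\<forall>e\<in>E. card (e \<inter> A) = 1" and fv: "valid3 E f"
  shows "Rg E x y \<Longrightarrow> (if (x \<in> A) = (y \<in> A) then 3 dvd (f y - f x) else 3 dvd (f y + f x))"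
  unfolding Rg_def
proof (induction rule: rtranclp_induct)
  case base then show ?case by simp
next
  case (step y z)
  have d: "(y \<in> A) \<noteq> (z \<in> A)" using edge_sides[OF step(2) c2 bip] .
  have yz: "3 dvd (f y + f z)" using fv step(2) by (simp add: valid3_def)
  show ?case
  proof (cases "(x \<in> A) = (y \<in> A)")
    case True
    then have h: "3 dvd (f y - f x)" using step(3) by simp
    have eq: "(f y + f z) - (f y - f x) = f z + f x" by simp
    have "3 dvd (f z + f x)" using dvd_diff[OF yz h] by (simp only: eq)
    then show ?thesis using True d by simp
  next
    case False
    then have h: "3 dvd (f y + f x)" using step(3) by simp
    have eq: "(f y + f z) - (f y + f x) = f z - f x" by simp
    have "3 dvd (f z - f x)" using dvd_diff[OF yz h] by (simp only: eq)
    then show ?thesis using False d by simp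
  qed
qed

definition Bc :: "'a set \<Rightarrow> 'a set set \<Rightarrow> 'a set \<Rightarrow> 'a \<Rightarrow> 'a set" where
  "Bc V E A w = {y\<in>V. Rg E w y \<and> y \<notin> A}"

definition Ac :: "'a set \<Rightarrow> 'a set set \<Rightarrow> 'a set \<Rightarrow> 'a \<Rightarrow> 'a set" where
  "Ac V E A w = {y\<in>V. Rg E w y \<and> y \<in> A}"

definition inN :: "'a set \<Rightarrow> 'a set set \<Rightarrow> 'a set \<Rightarrow> 'a \<Rightarrow> bool" where
  "inN V E A w \<longleftrightarrow> w \<in> V \<and> nbrs E w \<noteq> {} \<and> (if 2 \<le> card (Bc V E A w) then w \<notin> A else w \<in> A)"

definition Nc :: "'a set \<Rightarrow> 'a set set \<Rightarrow> 'a set \<Rightarrow> 'a \<Rightarrow> 'a set" where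
  "Nc V E A w = {y\<in>V. Rg E w y \<and> inN V E A y}"

definition pick1 :: "'a set \<Rightarrow> 'a" where "pick1 S = (SOME x. x \<in> S)"
definition pick2 :: "'a set \<Rightarrow> 'a" where "pick2 S = (SOME x. x \<in> S \<and> x \<noteq> pick1 S)"

definition tt :: "'a set \<Rightarrow> 'a set set \<Rightarrow> 'a set \<Rightarrow> 'a \<Rightarrow> int" where
  "tt V E A y = (if inN V E A y then
      1 + (if y = pick1 (Nc V E A y) \<and> card (Nc V E A y) mod 3 \<noteq> 0 then 1 else 0)
        + (if y = pick2 (Nc V E A y) \<and> card (Nc V E A y) mod 3 = 1 then 1 else 0) else 0)"

lemma picks:
  assumes "finite S" "2 \<le> card S"
  shows "pick1 S \<in> S" "pick2 S \<in> S" "pick2 S \<noteq> pick1 S"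
proof -
  have "S \<noteq> {}" using assms by auto
  then show p1: "pick1 S \<in> S" unfolding pick1_def by (simp add: some_in_eq)
  have "\<exists>x. x \<in> S \<and> x \<noteq> pick1 S"
  proof (rule ccontr)
    assume "\<not> (\<exists>x. x \<in> S \<and> x \<noteq> pick1 S)"
    then have "S \<subseteq> {pick1 S}" by blast
    then have "card S \<le> card {pick1 S}" by (intro card_mono) simp_all
    then have "card S \<le> 1" by simp
    then show False using assms by simp
  qed
  then have "pick2 S \<in> S \<and> pick2 S \<noteq> pick1 S" unfolding pick2_def by (rule someI_ex)
  then show "pick2 S \<in> S" "pick2 S \<noteq> pick1 S" by auto
qed

lemma mod3_aux: "(3::int) dvd (int n + (if n mod 3 \<noteq> 0 then 1 else 0) + (if n mod 3 = 1 then 1 else 0))"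
proof -
  have "n = 3 * (n div 3) + n mod 3" by simp
  then have n: "int n = 3 * int (n div 3) + int (n mod 3)" by (metis of_nat_add of_nat_mult of_nat_numeral)
  consider "n mod 3 = 0" | "n mod 3 = 1" | "n mod 3 = 2" by arith
  then show ?thesis
  proof cases
    case 1 then show ?thesis using n by simp
  next
    case 2
    then have "int n + (if n mod 3 \<noteq> 0 then 1 else 0) + (if n mod 3 = 1 then 1 else 0) = 3 * (int (n div 3) + 1)"
      using n by simp
    then show ?thesis by simp
  next
    case 3
    then have "int n + (if n mod 3 \<noteq> 0 then 1 else 0) + (if n mod 3 = 1 then 1 else 0) = 3 * (int (n div 3) + 1)"
      using n by simp
    then show ?thesis by simp
  qed
qed

lemma card_le1_single: "finite S \<Longrightarrow> card S \<le> 1 \<Longrightarrow> w \<in> S \<Longrightarrow> S = {w}"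
proof -
  assume f: "finite S" and c: "card S \<le> 1" and w: "w \<in> S"
  have "S \<subseteq> {w}"
  proof
    fix x assume x: "x \<in> S"
    show "x \<in> {w}"
    proof (rule ccontr)
      assume "x \<notin> {w}"
      then have "card {w,x} = 2" by simp
      moreover have "{w,x} \<subseteq> S" using x w by simp
      ultimately have "2 \<le> card S" using card_mono[OF f \<open>{w,x} \<subseteq> S\<close>] by simp
      then show False using c by simp
    qed
  qed
  then show ?thesis using w by blast
qed

locale gsetup =
  fixes V :: "'a set" and E :: "'a set set" and A :: "'a set"
  assumes finV: "finite V" and sub: "\<forall>e\<in>E. e \<subseteq> V" and c2: "\<forall>e\<in>E. card e = 2"
    and bip: "\<forall>e\<in>E. card (e \<inter> A) = 1" and nc: "nice E"
begin

lemma Bc_eq: "Rg E w y \<Longrightarrow> Bc V E A w = Bc V E A y"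
proof -
  assume r: "Rg E w y"
  show ?thesis unfolding Bc_def using Rg_trans[OF r] Rg_trans[OF Rg_sym[OF r]] by auto
qed

lemma Ac_eq: "Rg E w y \<Longrightarrow> Ac V E A w = Ac V E A y"
proof -
  assume r: "Rg E w y"
  show ?thesis unfolding Ac_def using Rg_trans[OF r] Rg_trans[OF Rg_sym[OF r]] by auto
qed

lemma Nc_eq: "Rg E w y \<Longrightarrow> Nc V E A w = Nc V E A y"
proof -
  assume r: "Rg E w y"
  show ?thesis unfolding Nc_def using Rg_trans[OF r] Rg_trans[OF Rg_sym[OF r]] by auto
qed

lemma edge_inN: "{u,v} \<in> E \<Longrightarrow> inN V E A u \<noteq> inN V E A v"
proof -
  assume e: "{u,v} \<in> E"
  have d: "(u \<in> A) \<noteq> (v \<in> A)" using edge_sides[OF e c2 bip] .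
  have V: "u \<in> V" "v \<in> V" using e sub by auto
  have "v \<in> nbrs E u" "u \<in> nbrs E v" using e by (auto simp: nbrs_def insert_commute)
  then have n: "nbrs E u \<noteq> {}" "nbrs E v \<noteq> {}" by auto
  have "Bc V E A u = Bc V E A v" using Bc_eq[OF Rg_edge[OF e]] .
  then show ?thesis using d V n unfolding inN_def by auto
qed

lemma inN_V: "inN V E A w \<Longrightarrow> w \<in> V" unfolding inN_def by simp

lemma finBc: "finite (Bc V E A w)" unfolding Bc_def using finV by simp
lemma finAc: "finite (Ac V E A w)" unfolding Ac_def using finV by simp
lemma finNc: "finite (Nc V E A w)" unfolding Nc_def using finV by simp

lemma same_side: "inN V E A w \<Longrightarrow> x \<in> Nc V E A w \<Longrightarrow> (x \<in> A) = (w \<in> A)"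
proof -
  assume w: "inN V E A w" and x: "x \<in> Nc V E A w"
  then have "Rg E w x" "inN V E A x" unfolding Nc_def by auto
  moreover have "Bc V E A x = Bc V E A w" using Bc_eq[OF \<open>Rg E w x\<close>] by simp
  ultimately show ?thesis using w unfolding inN_def by (auto split: if_splits)
qed

lemma Nc_card: "inN V E A w \<Longrightarrow> 2 \<le> card (Nc V E A w)"
proof -
  assume w: "inN V E A w"
  have wV: "w \<in> V" using w unfolding inN_def by blast
  have nbw: "nbrs E w \<noteq> {}" using w unfolding inN_def by blast
  have hasnb: "nbrs E y \<noteq> {}" if ry: "Rg E w y" for y
  proof (cases "w = y")
    case True then show ?thesis using nbw by simp
  next
    case False then show ?thesis using Rg_nb[OF ry] by simp
  qed
  show ?thesis
  proof (cases "2 \<le> card (Bc V E A w)")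
    case True
    have "Bc V E A w \<subseteq> Nc V E A w"
    proof
      fix y assume y: "y \<in> Bc V E A w"
      then have r: "Rg E w y" "y \<in> V" "y \<notin> A" unfolding Bc_def by auto
      have "Bc V E A y = Bc V E A w" using Bc_eq[OF r(1)] by simp
      then have "inN V E A y" using r hasnb True unfolding inN_def by auto
      then show "y \<in> Nc V E A w" using r unfolding Nc_def by auto
    qed
    then have "card (Bc V E A w) \<le> card (Nc V E A w)" by (rule card_mono[OF finNc])
    then show ?thesis using True by simp
  next
    case False
    then have wA: "w \<in> A" using w unfolding inN_def by auto
    have AN: "Ac V E A w \<subseteq> Nc V E A w"
    proof
      fix y assume y: "y \<in> Ac V E A w"
      then have r: "Rg E w y" "y \<in> V" "y \<in> A" unfolding Ac_def by auto
      have "Bc V E A y = Bc V E A w" using Bc_eq[OF r(1)] by simp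
      then have "inN V E A y" using r hasnb False unfolding inN_def by auto
      then show "y \<in> Nc V E A w" using r unfolding Nc_def by auto
    qed
    have "2 \<le> card (Ac V E A w)"
    proof (rule ccontr)
      assume "\<not> 2 \<le> card (Ac V E A w)"
      then have c1: "card (Ac V E A w) \<le> 1" by simp
      have wAc: "w \<in> Ac V E A w" using wV wA Rg_refl unfolding Ac_def by auto
      then have Aw: "Ac V E A w = {w}" using card_le1_single[OF finAc c1] by blast
      obtain z where z: "z \<in> nbrs E w" using nbw by auto
      have ezw: "{z,w} \<in> E" using z by (simp add: nbrs_def)
      have zA: "z \<notin> A" using edge_sides[OF ezw c2 bip] wA by auto
      have zV: "z \<in> V" using ezw sub by auto
      have Rwz: "Rg E w z" using Rg_edge[of w z E] ezw by (simp add: insert_commute)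
      have zB: "z \<in> Bc V E A w" using zA zV Rwz unfolding Bc_def by auto
      have "card (Bc V E A w) \<le> 1" using False by simp
      then have Bw: "Bc V E A w = {z}" using card_le1_single[OF finBc _ zB] by blast
      have nw: "nbrs E w = {z}"
      proof
        show "nbrs E w \<subseteq> {z}"
        proof
          fix y assume y: "y \<in> nbrs E w"
          then have eyw: "{y,w} \<in> E" by (simp add: nbrs_def)
          have "y \<notin> A" using edge_sides[OF eyw c2 bip] wA by auto
          moreover have "y \<in> V" using eyw sub by auto
          moreover have "Rg E w y" using Rg_edge[of w y E] eyw by (simp add: insert_commute)
          ultimately have "y \<in> Bc V E A w" unfolding Bc_def by auto
          then show "y \<in> {z}" using Bw by simp
        qed
        show "{z} \<subseteq> nbrs E w" using z by simp
      qed
      have nz: "nbrs E z = {w}"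
      proof
        show "nbrs E z \<subseteq> {w}"
        proof
          fix y assume y: "y \<in> nbrs E z"
          then have eyz: "{y,z} \<in> E" by (simp add: nbrs_def)
          have "y \<in> A" using edge_sides[OF eyz c2 bip] zA by auto
          moreover have "y \<in> V" using eyz sub by auto
          moreover have "Rg E z y" using Rg_edge[of z y E] eyz by (simp add: insert_commute)
          then have "Rg E w y" using Rg_trans[OF Rwz] by blast
          ultimately have "y \<in> Ac V E A w" unfolding Ac_def by auto
          then show "y \<in> {w}" using Aw by simp
        qed
        show "{w} \<subseteq> nbrs E z" using ezw by (simp add: nbrs_def insert_commute)
      qed
      have "\<not> (degree E z = 1 \<and> degree E w = 1)" using nc ezw unfolding nice_def by blast
      then show False using nw nz by (simp add: degree_def)
    qed
    moreover have "card (Ac V E A w) \<le> card (Nc V E A w)" using AN by (rule card_mono[OF finNc])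
    ultimately show ?thesis by simp
  qed
qed

lemma tt_vals: "inN V E A y \<Longrightarrow> tt V E A y = 1 \<or> tt V E A y = 2"
proof -
  assume y: "inN V E A y"
  have "pick2 (Nc V E A y) \<noteq> pick1 (Nc V E A y)" using picks(3)[OF finNc Nc_card[OF y]] .
  then show ?thesis using y unfolding tt_def by auto
qed

lemma tt0: "\<not> inN V E A y \<Longrightarrow> tt V E A y = 0" unfolding tt_def by simp

lemma sum_Nc: "inN V E A w \<Longrightarrow> 3 dvd (\<Sum>y\<in>Nc V E A w. tt V E A y)"
proof -
  assume w: "inN V E A w"
  define S where "S = Nc V E A w"
  define n where "n = card S"
  define p where "p = pick1 S"
  define q where "q = pick2 S"
  have finS: "finite S" unfolding S_def by (rule finNc)
  have pq: "p \<in> S" "q \<in> S" "q \<noteq> p" using picks[OF finS] Nc_card[OF w] unfolding S_def p_def q_def by auto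
  have tS: "\<And>y. y \<in> S \<Longrightarrow> tt V E A y = 1 + (if y = p \<and> n mod 3 \<noteq> 0 then 1 else 0) + (if y = q \<and> n mod 3 = 1 then 1 else 0)"
  proof -
    fix y assume yS: "y \<in> S"
    then have "inN V E A y" "Rg E w y" unfolding S_def Nc_def by auto
    moreover have "Nc V E A y = S" unfolding S_def using Nc_eq[OF \<open>Rg E w y\<close>] by simp
    ultimately show "tt V E A y = 1 + (if y = p \<and> n mod 3 \<noteq> 0 then 1 else 0) + (if y = q \<and> n mod 3 = 1 then 1 else 0)"
      unfolding tt_def p_def q_def n_def by simp
  qed
  have "(\<Sum>y\<in>S. tt V E A y) = (\<Sum>y\<in>S. 1 + (if y = p \<and> n mod 3 \<noteq> 0 then 1 else 0) + (if y = q \<and> n mod 3 = 1 then 1 else 0))"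
    using tS by (rule sum.cong[OF refl])
  also have "\<dots> = int n + (if n mod 3 \<noteq> 0 then 1 else 0) + (if n mod 3 = 1 then 1 else 0)"
  proof -
    have a: "(\<Sum>y\<in>S. (if y = p \<and> n mod 3 \<noteq> 0 then 1 else 0)) = (if n mod 3 \<noteq> 0 then 1 else (0::int))"
      using pq(1) finS by (cases "n mod 3 = 0") (simp_all add: sum.delta)
    have b: "(\<Sum>y\<in>S. (if y = q \<and> n mod 3 = 1 then 1 else 0)) = (if n mod 3 = 1 then 1 else (0::int))"
      using pq(2) finS by (cases "n mod 3 = 1") (simp_all add: sum.delta)
    show ?thesis using a b by (simp add: sum.distrib n_def)
  qed
  finally have eq: "(\<Sum>y\<in>S. tt V E A y) = int n + (if n mod 3 \<noteq> 0 then 1 else 0) + (if n mod 3 = 1 then 1 else 0)" .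
  have "(3::int) dvd (int n + (if n mod 3 \<noteq> 0 then 1 else 0) + (if n mod 3 = 1 then 1 else 0))"
    by (rule mod3_aux)
  then show ?thesis using eq unfolding S_def by simp
qed

lemma cond_tt: "valid3 E f \<Longrightarrow> 3 dvd (\<Sum>w\<in>V. f w * tt V E A w)"
proof -
  assume fv: "valid3 E f"
  define N where "N = {w\<in>V. inN V E A w}"
  have finN: "finite N" unfolding N_def using finV by simp
  have "(\<Sum>w\<in>V. f w * tt V E A w) = (\<Sum>w\<in>N. f w * tt V E A w)"
    unfolding N_def by (rule sum.mono_neutral_right[OF finV]) (auto simp: tt0)
  also have "\<dots> = (\<Sum>S\<in>Nc V E A ` N. (\<Sum>w\<in>{x\<in>N. Nc V E A x = S}. f w * tt V E A w))"
    by (rule sum.image_gen[OF finN])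
  finally have eq: "(\<Sum>w\<in>V. f w * tt V E A w) = (\<Sum>S\<in>Nc V E A ` N. (\<Sum>w\<in>{x\<in>N. Nc V E A x = S}. f w * tt V E A w))" .
  have "3 dvd (\<Sum>S\<in>Nc V E A ` N. (\<Sum>w\<in>{x\<in>N. Nc V E A x = S}. f w * tt V E A w))"
  proof (rule dvd_sum)
    fix S assume "S \<in> Nc V E A ` N"
    then obtain w0 where w0: "w0 \<in> N" "S = Nc V E A w0" by blast
    have iw0: "inN V E A w0" using w0 unfolding N_def by simp
    have setq: "{x\<in>N. Nc V E A x = S} = Nc V E A w0"
    proof (intro equalityI subsetI)
      fix x assume "x \<in> {x\<in>N. Nc V E A x = S}"
      then have "x \<in> N" "Nc V E A x = S" by auto
      moreover then have "x \<in> Nc V E A x" unfolding N_def Nc_def using Rg_refl by auto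
      ultimately show "x \<in> Nc V E A w0" using w0 by simp
    next
      fix x assume x: "x \<in> Nc V E A w0"
      then have "Rg E w0 x" "inN V E A x" "x \<in> V" unfolding Nc_def by auto
      then show "x \<in> {x\<in>N. Nc V E A x = S}" using Nc_eq w0 unfolding N_def by auto
    qed
    have fx: "\<And>x. x \<in> Nc V E A w0 \<Longrightarrow> 3 dvd (f x - f w0)"
    proof -
      fix x assume x: "x \<in> Nc V E A w0"
      then have "Rg E w0 x" unfolding Nc_def by auto
      from Rg_f[OF c2 bip fv this] show "3 dvd (f x - f w0)" using same_side[OF iw0 x] by simp
    qed
    have "(\<Sum>w\<in>Nc V E A w0. f w * tt V E A w) =
          (\<Sum>w\<in>Nc V E A w0. (f w - f w0) * tt V E A w) + f w0 * (\<Sum>w\<in>Nc V E A w0. tt V E A w)"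
    proof -
      have "(\<Sum>w\<in>Nc V E A w0. f w * tt V E A w) = (\<Sum>w\<in>Nc V E A w0. (f w - f w0) * tt V E A w + f w0 * tt V E A w)"
        by (rule sum.cong) (simp_all add: algebra_simps)
      also have "\<dots> = (\<Sum>w\<in>Nc V E A w0. (f w - f w0) * tt V E A w) + (\<Sum>w\<in>Nc V E A w0. f w0 * tt V E A w)"
        by (rule sum.distrib)
      also have "\<dots> = (\<Sum>w\<in>Nc V E A w0. (f w - f w0) * tt V E A w) + f w0 * (\<Sum>w\<in>Nc V E A w0. tt V E A w)"
        by (simp add: sum_distrib_left)
      finally show ?thesis .
    qed
    moreover have "3 dvd (\<Sum>w\<in>Nc V E A w0. (f w - f w0) * tt V E A w)"
      by (rule dvd_sum) (simp add: fx)
    moreover have "3 dvd (f w0 * (\<Sum>w\<in>Nc V E A w0. tt V E A w))"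
      using sum_Nc[OF iw0] by simp
    ultimately show "3 dvd (\<Sum>w\<in>{x\<in>N. Nc V E A x = S}. f w * tt V E A w)"
      unfolding setq by simp
  qed
  then show ?thesis using eq by simp
qed

end

lemma sig_mod:
  fixes c :: "'a set \<Rightarrow> nat" and \<rho> :: "'a set \<Rightarrow> int"
  assumes "\<And>e. 3 dvd (int (c e) - \<rho> e)" and "finite (nbrs E w)"
  shows "3 dvd (int (sigma E c w) - (\<Sum>u\<in>nbrs E w. \<rho> {w,u}))"
proof -
  have "int (sigma E c w) - (\<Sum>u\<in>nbrs E w. \<rho> {w,u}) = (\<Sum>u\<in>nbrs E w. int (c {w,u}) - \<rho> {w,u})"
    by (simp add: sigma_def sum_subtractf)
  moreover have "3 dvd (\<Sum>u\<in>nbrs E w. int (c {w,u}) - \<rho> {w,u})"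
    by (rule dvd_sum) (rule assms(1))
  ultimately show ?thesis by simp
qed

theorem mainTheorem2:
  fixes V :: "'a set" and E :: "'a set set"
  assumes "simple_graph V E" and "bipartite V E" and "nice E"
  shows "qm_nsd_colorable 6 V E"
proof -
  from assms(1) have finV: "finite V" and sub: "\<forall>e\<in>E. e \<subseteq> V" and c2: "\<forall>e\<in>E. card e = 2"
    unfolding simple_graph_def by auto
  from assms(2) obtain A where bip: "\<forall>e\<in>E. card (e \<inter> A) = 1" unfolding bipartite_def by blast
  interpret G: gsetup V E A using finV sub c2 bip assms(3) by unfold_locales
  have finE: "finite E"
  proof (rule finite_subset)
    show "E \<subseteq> Pow V" using sub by blast
    show "finite (Pow V)" using finV by simp
  qed
  have UV: "\<Union>E \<subseteq> V" using sub by blast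
  have ex\<rho>: "\<exists>\<rho>::'a set\<Rightarrow>int. \<forall>w\<in>V. 3 dvd ((\<Sum>u\<in>nbrs E w. \<rho> {w,u}) - tt V E A w)"
    using z3_solve[OF finE c2 finV UV] G.cond_tt by blast
  then obtain \<rho> :: "'a set \<Rightarrow> int" where \<rho>: "\<forall>w\<in>V. 3 dvd ((\<Sum>u\<in>nbrs E w. \<rho> {w,u}) - tt V E A w)"
    by blast
  obtain h where h: "\<forall>v (b::bool). 2 * card {u\<in>nbrs E v. h {v,u} = b} \<le> card (nbrs E v) + 1"
    using equitable[OF finE c2 bip] by blast
  define r where "r e = (if \<rho> e mod 3 = 0 then 3 else nat (\<rho> e mod 3))" for e
  define c where "c e = r e + (if h e then 3 else 0)" for e
  have r13: "1 \<le> r e \<and> r e \<le> 3" for e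
  proof -
    have "0 \<le> \<rho> e mod 3" "\<rho> e mod 3 < 3" by simp_all
    then show ?thesis unfolding r_def by auto
  qed
  have rmod: "3 dvd (int (r e) - \<rho> e)" for e
  proof (cases "\<rho> e mod 3 = 0")
    case True
    then have "3 dvd \<rho> e" by presburger
    then show ?thesis using True by (simp add: r_def)
  next
    case False
    have "0 \<le> \<rho> e mod 3" by simp
    then have "int (r e) = \<rho> e mod 3" using False by (simp add: r_def)
    then show ?thesis by (simp add: mod_eq_0_iff_dvd[symmetric] mod_diff_left_eq)
  qed
  have cmod: "3 dvd (int (c e) - \<rho> e)" for e
  proof -
    have eq: "int (c e) - \<rho> e = (int (r e) - \<rho> e) + (if h e then 3 else 0)" by (simp add: c_def)
    have "3 dvd ((int (r e) - \<rho> e) + (if h e then 3 else 0))"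
      using rmod[of e] by (cases "h e") (simp_all add: dvd_add)
    then show ?thesis unfolding eq .
  qed
  have ch: "(3 < c e) = h e" for e using r13[of e] by (auto simp: c_def)
  have finN: "\<And>w. finite (nbrs E w)" using finite_nbrs[OF finE c2] .
  have col: "edge_coloring 6 E c"
    unfolding edge_coloring_def
  proof
    fix e
    show "c e \<in> {1..6}" using r13[of e] by (auto simp: c_def)
  qed
  have qm: "quasi_majority V E c"
    unfolding quasi_majority_def
  proof (intro ballI allI)
    fix v i
    have "{u\<in>nbrs E v. c {v,u} = i} \<subseteq> {u\<in>nbrs E v. h {v,u} = (3 < i)}"
      using ch by auto
    then have "card {u\<in>nbrs E v. c {v,u} = i} \<le> card {u\<in>nbrs E v. h {v,u} = (3 < i)}"
      by (rule card_mono[rotated]) (simp add: finN)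
    moreover have "2 * card {u\<in>nbrs E v. h {v,u} = (3 < i)} \<le> card (nbrs E v) + 1"
      using h by blast
    ultimately show "2 * card {u\<in>nbrs E v. c {v,u} = i} \<le> degree E v + 1"
      by (simp add: degree_def)
  qed
  have sigt: "3 dvd (int (sigma E c w) - tt V E A w)" if "w \<in> V" for w
  proof -
    have "3 dvd (int (sigma E c w) - (\<Sum>u\<in>nbrs E w. \<rho> {w,u}))"
      by (rule sig_mod[OF cmod finN])
    moreover have "3 dvd ((\<Sum>u\<in>nbrs E w. \<rho> {w,u}) - tt V E A w)" using \<rho> that by blast
    ultimately have "3 dvd ((int (sigma E c w) - (\<Sum>u\<in>nbrs E w. \<rho> {w,u})) + ((\<Sum>u\<in>nbrs E w. \<rho> {w,u}) - tt V E A w))"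
      by (rule dvd_add)
    then show ?thesis by simp
  qed
  have nsd: "nsd E c"
    unfolding nsd_def
  proof (intro allI impI)
    fix u v assume e: "{u,v} \<in> E"
    have V: "u \<in> V" "v \<in> V" using e sub by auto
    have d: "inN V E A u \<noteq> inN V E A v" using G.edge_inN[OF e] by simp
    show "sigma E c u \<noteq> sigma E c v"
    proof
      assume eq: "sigma E c u = sigma E c v"
      have a: "3 dvd (int (sigma E c u) - tt V E A v)" using sigt[OF V(2)] eq by simp
      have b: "3 dvd (int (sigma E c u) - tt V E A u)" using sigt[OF V(1)] .
      have "3 dvd ((int (sigma E c u) - tt V E A v) - (int (sigma E c u) - tt V E A u))"
        using dvd_diff[OF a b] .
      moreover have "(int (sigma E c u) - tt V E A v) - (int (sigma E c u) - tt V E A u) = tt V E A u - tt V E A v"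
        by simp
      ultimately have dd: "3 dvd (tt V E A u - tt V E A v)" by simp
      show False
      proof (cases "inN V E A u")
        case True
        then have "\<not> inN V E A v" using d by simp
        then have "tt V E A v = 0" by (rule G.tt0)
        moreover have "tt V E A u = 1 \<or> tt V E A u = 2" using G.tt_vals[OF True] .
        ultimately show False using dd by auto
      next
        case False
        then have "inN V E A v" using d by simp
        then have "tt V E A v = 1 \<or> tt V E A v = 2" by (rule G.tt_vals)
        moreover have "tt V E A u = 0" using False by (rule G.tt0)
        ultimately show False using dd by auto
      qed
    qed
  qed
  show ?thesis unfolding qm_nsd_colorable_def using col qm nsd by blast
qed

end
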